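(* Under either the overlap preference model or the cost preference model, for every $k\in\mathbb{N}$, the pair $\langle R,F\rangle$, where $R$ is the $k$-equal-representation shortlisting rule and $F$ is any unanimous allocation rule, is neither U-FSSP-P nor U-FSSP-O.
   Context: Throughout, $\mathbb{N}=\{1,2,3,\dots\}$. Let $\mathbb{P}=\{p_1,\dots,p_m\}$ be a finite set of projects, $c:\mathbb{P}\to\mathbb{N}$ a cost function with $c(P)=\sum_{p\in P}c(p)$, $B\in\mathbb{N}$ a budget with $c(p)\le B$ for all $p$; agents $\mathcal{N}=\{1,\dots,n\}$. Tie-breaking: for a nonempty family $\mathfrak{P}$ of subsets of $\mathbb{P}$, $T(\mathfrak{P})$ is the unique $P\in\mathfrak{P}$ such that for all $P'\in\mathfrak{P}\setminus\{P\}$ the lowest-index project of $(P\setminus P')\cup(P'\setminus P)$ lies in $P$. Greedy selection $\mathit{GREED}(P,\gg)$, for $P\subseteq\mathbb{P}$ and a strict linear order $\gg$ on $P$, examines projects in the order $\gg$ and selects a project iff doing so keeps the total cost of selected projects at most $B$. Shortlisting stage: shortlisting instance $I=\langle\mathbb{P},c,B\rangle$; shortlisting profile $\boldsymbol{P}=(P_1,\dots,P_n)$, $P_i\subseteq\mathbb{P}$, $\bigcup\boldsymbol{P}=P_1\cup\dots\cup P_n$; $(\boldsymbol{P}_{-i},P_i')$ replaces $P_i$ by $P_i'$. The $k$-equal-representation shortlisting rule returns $R(I,\boldsymbol{P})=T\big(\operatorname*{argmax}_{P\subseteq\bigcup\boldsymbol{P},\ c(P)\le kB}\sum_{i\in\mathcal{N}}\sum_{\ell=0}^{|P_i\cap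 P|}n^{-\ell}\big)$. Each agent $i$ has an awareness set $C_i\subseteq\mathbb{P}$; $\boldsymbol{C}=(C_1,\dots,C_n)$. Allocation stage: allocation instance $\langle\mathcal{P},c,B\rangle$, $\mathcal{P}\subseteq\mathbb{P}$; profile $\boldsymbol{A}=(A_1,\dots,A_n)$, $A_i\subseteq\mathcal{P}$; $A\subseteq\mathcal{P}$ is feasible if $c(A)\le B$; an allocation rule $F$ outputs a feasible $F(I,\boldsymbol{A})$; $F$ is unanimous if for every allocation instance $I$ and every profile $(A,\dots,A)$ with $A$ feasible, $F(I,(A,\dots,A))\supseteq A$. Preferences: each agent $i$ has a strict linear order $\rhd_i$ on $\mathbb{P}$; $\mathit{top}_i(\mathcal{P})=\mathit{GREED}(\mathcal{P},\rhd_i|_{\mathcal{P}})$. For $P\subseteq\mathbb{P}$: overlap model $A\succeq_P A'$ iff $|A\cap P|\ge|A'\cap P|$; cost model $A\succeq_P A'$ iff $c(A\cap P)\ge c(A'\cap P)$; $\succ_P$ its strict part. $\mathit{best}(\succ,\mathfrak{P})$ is the set of elements of $\mathfrak{P}$ undominated w.r.t. $\succ$. Best response: for $I=\langle\mathcal{P},c,B\rangle$, profile $\boldsymbol{A}$, agent $i$: $A_i^\star(I,\boldsymbol{A})=T(\mathit{best}(\succ_{\mathit{top}_i(\mathcal{P})},\{F(I,(\boldsymbol{A}_{-i},A_i'))\mid A_i'\subseteq\mathcal{P}\}))$ and $F^\star(I,\boldsymbol{A})=F(I,(\boldsymbol{A}_{-i},A_i^\star(I,\boldsymbol{A})))$.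 Manipulation: given $R,F$, shortlisting instance $I_1$, profile $\boldsymbol{P}$, agent $i$, $P_i'\subseteq\mathbb{P}$, let $\mathcal{P}=R(I_1,\boldsymbol{P})$, $\mathcal{P}'=R(I_1,(\boldsymbol{P}_{-i},P_i'))$, $I_2=\langle\mathcal{P},c,B\rangle$, $I_2'=\langle\mathcal{P}',c,B\rangle$, $Q=\mathit{top}_i(\mathcal{P}\cup\mathcal{P}')$. $P_i'$ is a successful pessimistic manipulation if for all profiles $\boldsymbol{A}$ on $\mathcal{P}$ and $\boldsymbol{A}'$ on $\mathcal{P}'$, $F^\star(I_2',\boldsymbol{A}')\succeq_Q F^\star(I_2,\boldsymbol{A})$, strictly for at least one pair; a successful optimistic manipulation if for some $\boldsymbol{A}$ on $\mathcal{P}$ and some $\boldsymbol{A}'$ on $\mathcal{P}'$, $F^\star(I_2',\boldsymbol{A}')\succ_Q F^\star(I_2,\boldsymbol{A})$. U-FSSP: for a preference model and a manipulation type, $\langle R,F\rangle$ is U-FSSP if for every shortlisting instance, awareness profile $\boldsymbol{C}$, shortlisting profile $\boldsymbol{P}$ with $P_{i'}\subseteq C_{i'}$ for all $i'$, and agent $i$, there is no $P_i'\subseteq C_i\cup\bigcup\boldsymbol{P}$ such that submitting $P_i'$ instead of $\mathit{top}_i(C_i\cup\bigcup\boldsymbol{P})$ (i.e., going from $(\boldsymbol{P}_{-i},\mathit{top}_i(C_i\cup\bigcup\boldsymbol{P}))$ to $(\boldsymbol{P}_{-i},P_i')$) is a successful manipulation of that type. U-FSSP-P and U-FSSP-O refer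 to pessimistic and optimistic manipulation. *)

theory Defs
  imports Complex_Main
begin

(* Projects are natural numbers; the index of a project is the number itself,
   so "lowest-index project" = minimum.  Profiles are lists indexed by agents
   0..n-1 (n = length of the list).  A cost function is c :: nat => nat,
   only its values on the relevant project set matter. *)

definition tie_break :: "nat set set \<Rightarrow> nat set" where
  "tie_break \<PP> = (THE P. P \<in> \<PP> \<and>
      (\<forall>P'\<in>\<PP>. P' \<noteq> P \<longrightarrow> Min ((P - P') \<union> (P' - P)) \<in> P))"

text \<open>The enumeration of P in the order given by the strict relation r
  ((x,y) \<in> r means x is ranked above y).\<close>
definition order_list :: "(nat \<times> nat) set \<Rightarrow> nat set \<Rightarrow> nat list" where
  "order_list r P = (THE xs. set xs = P \<and> distinct xs \<and> sorted_wrt (\<lambda>x y. (x, y) \<in> r) xs)"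

fun greed_aux :: "nat \<Rightarrow> (nat \<Rightarrow> nat) \<Rightarrow> nat list \<Rightarrow> nat set \<Rightarrow> nat set" where
  "greed_aux B c [] S = S"
| "greed_aux B c (x # xs) S =
     greed_aux B c xs (if sum c (insert x S) \<le> B then insert x S else S)"

definition GREED :: "nat \<Rightarrow> (nat \<Rightarrow> nat) \<Rightarrow> (nat \<times> nat) set \<Rightarrow> nat set \<Rightarrow> nat set" where
  "GREED B c r P = greed_aux B c (order_list r P) {}"

definition top_agent :: "(nat \<Rightarrow> (nat \<times> nat) set) \<Rightarrow> nat \<Rightarrow> nat \<Rightarrow> (nat \<Rightarrow> nat) \<Rightarrow> nat set \<Rightarrow> nat set" where
  "top_agent prefs i B c P = GREED B c (prefs i \<inter> (P \<times> P)) P"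

definition shortlisting_instance :: "nat set \<Rightarrow> (nat \<Rightarrow> nat) \<Rightarrow> nat \<Rightarrow> bool" where
  "shortlisting_instance PP c B \<longleftrightarrow> finite PP \<and> 1 \<le> B \<and> (\<forall>p\<in>PP. 1 \<le> c p \<and> c p \<le> B)"

definition alloc_instance :: "nat set \<Rightarrow> (nat \<Rightarrow> nat) \<Rightarrow> nat \<Rightarrow> bool" where
  "alloc_instance Pc c B \<longleftrightarrow> finite Pc \<and> 1 \<le> B \<and> (\<forall>p\<in>Pc. 1 \<le> c p \<and> c p \<le> B)"

definition profiles_on :: "nat \<Rightarrow> nat set \<Rightarrow> nat set list set" where
  "profiles_on n Pc = {As. length As = n \<and> (\<forall>A\<in>set As. A \<subseteq> Pc)}"

definition eqrep_score :: "nat set list \<Rightarrow> nat set \<Rightarrow> real" where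
  "eqrep_score Ps P = (\<Sum>j<length Ps. \<Sum>l=0..card (Ps ! j \<inter> P). (1 / real (length Ps)) ^ l)"

definition eq_rep :: "nat \<Rightarrow> (nat \<Rightarrow> nat) \<Rightarrow> nat \<Rightarrow> nat set list \<Rightarrow> nat set" where
  "eq_rep k c B Ps = tie_break
     {P. P \<subseteq> \<Union>(set Ps) \<and> sum c P \<le> k * B \<and>
         (\<forall>P'. P' \<subseteq> \<Union>(set Ps) \<and> sum c P' \<le> k * B \<longrightarrow> eqrep_score Ps P' \<le> eqrep_score Ps P)}"

type_synonym alloc_rule = "nat set \<Rightarrow> (nat \<Rightarrow> nat) \<Rightarrow> nat \<Rightarrow> nat set list \<Rightarrow> nat set"

definition allocation_rule :: "alloc_rule \<Rightarrow> bool" where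
  "allocation_rule F \<longleftrightarrow> (\<forall>Pc c B As. alloc_instance Pc c B \<and> 1 \<le> length As \<and> As \<in> profiles_on (length As) Pc
      \<longrightarrow> F Pc c B As \<subseteq> Pc \<and> sum c (F Pc c B As) \<le> B)"

definition unanimous :: "alloc_rule \<Rightarrow> bool" where
  "unanimous F \<longleftrightarrow> (\<forall>Pc c B n A. alloc_instance Pc c B \<and> 1 \<le> n \<and> A \<subseteq> Pc \<and> sum c A \<le> B
      \<longrightarrow> A \<subseteq> F Pc c B (replicate n A))"

datatype pref_model = Overlap | Cost

definition weak_pref :: "pref_model \<Rightarrow> (nat \<Rightarrow> nat) \<Rightarrow> nat set \<Rightarrow> nat set \<Rightarrow> nat set \<Rightarrow> bool" where
  "weak_pref M c Q A A' = (case M of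
       Overlap \<Rightarrow> card (A \<inter> Q) \<ge> card (A' \<inter> Q)
     | Cost \<Rightarrow> sum c (A \<inter> Q) \<ge> sum c (A' \<inter> Q))"

definition strict_pref :: "pref_model \<Rightarrow> (nat \<Rightarrow> nat) \<Rightarrow> nat set \<Rightarrow> nat set \<Rightarrow> nat set \<Rightarrow> bool" where
  "strict_pref M c Q A A' \<longleftrightarrow> weak_pref M c Q A A' \<and> \<not> weak_pref M c Q A' A"

definition best :: "(nat set \<Rightarrow> nat set \<Rightarrow> bool) \<Rightarrow> nat set set \<Rightarrow> nat set set" where
  "best sp \<PP> = {X\<in>\<PP>. \<not> (\<exists>Y\<in>\<PP>. sp Y X)}"

definition best_resp :: "pref_model \<Rightarrow> alloc_rule \<Rightarrow> (nat \<Rightarrow> (nat \<times> nat) set) \<Rightarrow> nat set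
     \<Rightarrow> (nat \<Rightarrow> nat) \<Rightarrow> nat \<Rightarrow> nat set list \<Rightarrow> nat \<Rightarrow> nat set" where
  "best_resp M F prefs Pc c B As i =
     tie_break (best (strict_pref M c (top_agent prefs i B c Pc))
                     {F Pc c B (As[i := A']) | A'. A' \<subseteq> Pc})"

definition F_star :: "pref_model \<Rightarrow> alloc_rule \<Rightarrow> (nat \<Rightarrow> (nat \<times> nat) set) \<Rightarrow> nat set
     \<Rightarrow> (nat \<Rightarrow> nat) \<Rightarrow> nat \<Rightarrow> nat set list \<Rightarrow> nat \<Rightarrow> nat set" where
  "F_star M F prefs Pc c B As i = F Pc c B (As[i := best_resp M F prefs Pc c B As i])"

datatype manip_kind = Pessimistic | Optimistic

type_synonym shortlist_rule = "(nat \<Rightarrow> nat) \<Rightarrow> nat \<Rightarrow> nat set list \<Rightarrow> nat set"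

definition successful_manip :: "manip_kind \<Rightarrow> pref_model \<Rightarrow> shortlist_rule \<Rightarrow> alloc_rule
     \<Rightarrow> (nat \<Rightarrow> (nat \<times> nat) set) \<Rightarrow> (nat \<Rightarrow> nat) \<Rightarrow> nat \<Rightarrow> nat set list \<Rightarrow> nat \<Rightarrow> nat set \<Rightarrow> bool" where
  "successful_manip kind M R F prefs c B Ps i P' =
     (let Pc = R c B Ps; Pc' = R c B (Ps[i := P']); Q = top_agent prefs i B c (Pc \<union> Pc');
          n = length Ps
      in case kind of
        Pessimistic \<Rightarrow>
          (\<forall>As\<in>profiles_on n Pc. \<forall>As'\<in>profiles_on n Pc'.
              weak_pref M c Q (F_star M F prefs Pc' c B As' i) (F_star M F prefs Pc c B As i)) \<and>
          (\<exists>As\<in>profiles_on n Pc. \<exists>As'\<in>profiles_on n Pc'.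
              strict_pref M c Q (F_star M F prefs Pc' c B As' i) (F_star M F prefs Pc c B As i))
      | Optimistic \<Rightarrow>
          (\<exists>As\<in>profiles_on n Pc. \<exists>As'\<in>profiles_on n Pc'.
              strict_pref M c Q (F_star M F prefs Pc' c B As' i) (F_star M F prefs Pc c B As i)))"

definition U_FSSP :: "manip_kind \<Rightarrow> pref_model \<Rightarrow> shortlist_rule \<Rightarrow> alloc_rule \<Rightarrow> bool" where
  "U_FSSP kind M R F \<longleftrightarrow>
     (\<forall>PP c B prefs Cs Ps i.
        shortlisting_instance PP c B \<and>
        (\<forall>j<length Ps. prefs j \<subseteq> PP \<times> PP \<and> strict_linear_order_on PP (prefs j)) \<and>
        length Cs = length Ps \<and>
        (\<forall>j<length Ps. Cs ! j \<subseteq> PP \<and> Ps ! j \<subseteq> Cs ! j) \<and>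
        i < length Ps
      \<longrightarrow> \<not> (\<exists>P'. P' \<subseteq> Cs ! i \<union> \<Union>(set Ps) \<and>
               successful_manip kind M R F prefs c B
                 (Ps[i := top_agent prefs i B c (Cs ! i \<union> \<Union>(set Ps))]) i P'))"

end

theory Submission
  imports Defs
begin


definition wt :: "nat set \<Rightarrow> real" where "wt P = (\<Sum>x\<in>P. (1/2::real)^x)"

lemma geo_int: "(\<Sum>x\<in>{Suc m..<Suc m + N}. (1/2::real)^x) = (1/2)^m - (1/2)^(m+N)"
  by (induction N) (auto simp: power_add)

lemma tail_bound:
  assumes "finite A" "\<forall>x\<in>A. m < x"
  shows "(\<Sum>x\<in>A. (1/2::real)^x) < (1/2)^m"
proof -
  obtain N where N: "\<forall>x\<in>A. x < Suc m + N"
    using assms(1) by (metis finite_nat_set_iff_bounded less_add_eq_less trans_less_add2)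
  have sub: "A \<subseteq> {Suc m..<Suc m + N}" using N assms(2) by auto
  have "(\<Sum>x\<in>A. (1/2::real)^x) \<le> (\<Sum>x\<in>{Suc m..<Suc m + N}. (1/2::real)^x)"
    by (rule sum_mono2) (use sub in auto)
  also have "\<dots> < (1/2)^m" unfolding geo_int by simp
  finally show ?thesis .
qed

lemma wt_less:
  assumes "finite P" "finite P'" "P \<noteq> P'" "Min ((P - P') \<union> (P' - P)) \<in> P"
  shows "wt P' < wt P"
proof -
  let ?D = "(P - P') \<union> (P' - P)"
  define m where "m = Min ?D"
  have fD: "finite ?D" using assms by auto
  have neD: "?D \<noteq> {}" using assms(3) by auto
  have mP: "m \<in> P - P'" using assms(4) Min_in[OF fD neD] unfolding m_def by auto
  have gt: "\<forall>x\<in>P' - P. m < x"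
  proof
    fix x assume x: "x \<in> P' - P"
    then have "m \<le> x" unfolding m_def using fD by (intro Min_le) auto
    moreover have "m \<noteq> x" using mP x by auto
    ultimately show "m < x" by simp
  qed
  have "wt P = (\<Sum>x\<in>P \<inter> P'. (1/2::real)^x) + (\<Sum>x\<in>P - P'. (1/2::real)^x)"
    unfolding wt_def using assms(1) by (rule sum.Int_Diff)
  moreover have "wt P' = (\<Sum>x\<in>P \<inter> P'. (1/2::real)^x) + (\<Sum>x\<in>P' - P. (1/2::real)^x)"
    unfolding wt_def using assms(2) sum.Int_Diff[of P' _ P] by (simp add: Int_commute)
  moreover have "(\<Sum>x\<in>P' - P. (1/2::real)^x) < (1/2)^m"
    using tail_bound[OF _ gt] assms(2) by auto
  moreover have "(1/2::real)^m \<le> (\<Sum>x\<in>P - P'. (1/2::real)^x)"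
    using mP assms(1) by (intro member_le_sum) auto
  ultimately show ?thesis by linarith
qed

definition beats :: "nat set \<Rightarrow> nat set \<Rightarrow> bool" where
  "beats P P' \<longleftrightarrow> Min ((P - P') \<union> (P' - P)) \<in> P"

lemma tie_break_unique:
  assumes "Z \<in> fam" "\<forall>P\<in>fam. finite P" "\<forall>P'\<in>fam. P' \<noteq> Z \<longrightarrow> Min ((Z - P') \<union> (P' - Z)) \<in> Z"
  shows "tie_break fam = Z"
  unfolding tie_break_def
proof (rule the_equality)
  show "Z \<in> fam \<and> (\<forall>P'\<in>fam. P' \<noteq> Z \<longrightarrow> Min ((Z - P') \<union> (P' - Z)) \<in> Z)" using assms by blast
next
  fix P assume P: "P \<in> fam \<and> (\<forall>P'\<in>fam. P' \<noteq> P \<longrightarrow> Min ((P - P') \<union> (P' - P)) \<in> P)"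
  show "P = Z"
  proof (rule ccontr)
    assume ne: "P \<noteq> Z"
    have "Min ((P - Z) \<union> (Z - P)) \<in> P" using P assms(1) ne[symmetric] by blast
    moreover have "Min ((Z - P) \<union> (P - Z)) \<in> Z" using assms P ne by blast
    moreover have e: "(Z - P) \<union> (P - Z) = (P - Z) \<union> (Z - P)" by blast
    moreover have "Min ((P - Z) \<union> (Z - P)) \<in> (P - Z) \<union> (Z - P)"
      using assms(1,2) P ne by (intro Min_in) auto
    ultimately show False by auto
  qed
qed

lemma tie_break_in:
  assumes "finite fam" "fam \<noteq> {}" "\<forall>P\<in>fam. finite P"
  shows "tie_break fam \<in> fam"
proof -
  have "Max (wt ` fam) \<in> wt ` fam" using assms by (intro Max_in) auto
  then obtain Z where Z: "Z \<in> fam" "wt Z = Max (wt ` fam)" by auto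
  have Zmax: "\<forall>P\<in>fam. wt P \<le> wt Z" using Z(2) assms(1) by auto
  have "\<forall>P'\<in>fam. P' \<noteq> Z \<longrightarrow> Min ((Z - P') \<union> (P' - Z)) \<in> Z"
  proof (intro ballI impI)
    fix P' assume P': "P' \<in> fam" "P' \<noteq> Z"
    have D: "Min ((Z - P') \<union> (P' - Z)) \<in> (Z - P') \<union> (P' - Z)"
      using assms(3) P' Z(1) by (intro Min_in) auto
    show "Min ((Z - P') \<union> (P' - Z)) \<in> Z"
    proof (rule ccontr)
      assume "Min ((Z - P') \<union> (P' - Z)) \<notin> Z"
      then have "Min ((P' - Z) \<union> (Z - P')) \<in> P'" using D by (simp add: Un_commute)
      then have "wt Z < wt P'" using wt_less[of P' Z] assms(3) P' Z(1) by auto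
      then show False using Zmax P'(1) by fastforce
    qed
  qed
  then have "tie_break fam = Z" using tie_break_unique Z(1) assms(3) by blast
  then show ?thesis using Z(1) by simp
qed

lemma tie_break_single: "tie_break {Z} = Z"
  unfolding tie_break_def by (rule the_equality) auto



definition val :: "pref_model \<Rightarrow> (nat \<Rightarrow> nat) \<Rightarrow> nat set \<Rightarrow> nat set \<Rightarrow> nat" where
  "val M c Q A = (case M of Overlap \<Rightarrow> card (A \<inter> Q) | Cost \<Rightarrow> sum c (A \<inter> Q))"

lemma weak_val: "weak_pref M c Q A A' \<longleftrightarrow> val M c Q A' \<le> val M c Q A"
  by (cases M) (auto simp: weak_pref_def val_def)

lemma strict_val: "strict_pref M c Q A A' \<longleftrightarrow> val M c Q A' < val M c Q A"
  unfolding strict_pref_def weak_val by auto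

lemma best_ne:
  assumes "finite fam" "fam \<noteq> {}"
  shows "best (strict_pref M c Q) fam \<noteq> {}"
proof -
  have "Max (val M c Q ` fam) \<in> val M c Q ` fam" using assms by (intro Max_in) auto
  then obtain Z where Z: "Z \<in> fam" "val M c Q Z = Max (val M c Q ` fam)" by auto
  have "\<forall>Y\<in>fam. val M c Q Y \<le> val M c Q Z" using Z(2) assms(1) by auto
  then have "Z \<in> best (strict_pref M c Q) fam" using Z(1) unfolding best_def strict_val by fastforce
  then show ?thesis by blast
qed

lemma prof_upd: "As \<in> profiles_on n Pc \<Longrightarrow> A \<subseteq> Pc \<Longrightarrow> As[i := A] \<in> profiles_on n Pc"
  unfolding profiles_on_def by (auto dest: set_update_subset_insert[THEN subsetD])

lemma Fstar_sub:
  assumes ai: "alloc_instance Pc c B" and ar: "allocation_rule F"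
    and As: "As \<in> profiles_on n Pc" and n: "1 \<le> n"
  shows "F_star M F prefs Pc c B As i \<subseteq> Pc"
proof -
  define fam where "fam = {F Pc c B (As[i := A']) | A'. A' \<subseteq> Pc}"
  have fPc: "finite Pc" using ai unfolding alloc_instance_def by auto
  have len: "length (As[i := A']) = n" for A' using As unfolding profiles_on_def by auto
  have memsub: "F Pc c B (As[i := A']) \<subseteq> Pc" if "A' \<subseteq> Pc" for A'
  proof -
    have "As[i := A'] \<in> profiles_on (length (As[i := A'])) Pc" using prof_upd[OF As that] len by simp
    then show ?thesis using ar ai n len unfolding allocation_rule_def by auto
  qed
  have famsub: "\<forall>X\<in>fam. X \<subseteq> Pc" using memsub unfolding fam_def by auto
  have "fam = (\<lambda>A'. F Pc c B (As[i := A'])) ` Pow Pc" unfolding fam_def by auto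
  then have ffam: "finite fam" using fPc by simp
  have nefam: "fam \<noteq> {}" unfolding fam_def by auto
  let ?b = "best (strict_pref M c (top_agent prefs i B c Pc)) fam"
  have bsub: "?b \<subseteq> fam" unfolding best_def by auto
  have finb: "\<forall>P\<in>?b. finite P"
  proof
    fix P assume "P \<in> ?b"
    then have "P \<subseteq> Pc" using bsub famsub by auto
    then show "finite P" using fPc finite_subset by auto
  qed
  have "tie_break ?b \<in> ?b"
    using finb best_ne[OF ffam nefam] bsub ffam famsub fPc
    by (intro tie_break_in) (auto intro: finite_subset)
  then have O: "tie_break ?b \<subseteq> Pc" using bsub famsub by auto
  have "As[i := tie_break ?b] \<in> profiles_on (length (As[i := tie_break ?b])) Pc"
    using prof_upd[OF As O] len by simp
  then have "F Pc c B (As[i := tie_break ?b]) \<subseteq> Pc" using ar ai n len unfolding allocation_rule_def by auto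
  then show ?thesis unfolding F_star_def best_resp_def fam_def by simp
qed



definition cst :: "nat \<Rightarrow> nat" where
  "cst p = (if p = 0 then 2 else if p = 1 then 3 else if p = 2 then 1 else if p = 3 then 2 else 3)"

definition prefK :: "nat \<Rightarrow> nat \<Rightarrow> (nat \<times> nat) set" where
  "prefK k j = {(p, q). p < q \<and> q \<le> k + 2}"

lemma cst_ge1: "1 \<le> cst x" by (simp add: cst_def)
lemma cst_ne0[simp]: "cst x \<noteq> 0" by (simp add: cst_def)
lemma cst_le3: "cst x \<le> 3" by (simp add: cst_def)

lemma sorted_wrt_prefK:
  assumes "P \<subseteq> {0..k+2}" "set xs \<subseteq> P"
  shows "sorted_wrt (\<lambda>x y. (x, y) \<in> prefK k j \<inter> P \<times> P) xs \<longleftrightarrow> sorted_wrt (<) xs"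
  using assms(2)
proof (induction xs)
  case Nil then show ?case by simp
next
  case (Cons a xs)
  then show ?case using assms(1) by (auto simp: prefK_def)
qed

lemma order_list_prefK:
  assumes "finite P" "P \<subseteq> {0..k+2}"
  shows "order_list (prefK k j \<inter> P \<times> P) P = sorted_list_of_set P"
  unfolding order_list_def
proof (rule the_equality)
  show "set (sorted_list_of_set P) = P \<and> distinct (sorted_list_of_set P) \<and>
    sorted_wrt (\<lambda>x y. (x, y) \<in> prefK k j \<inter> P \<times> P) (sorted_list_of_set P)"
    using assms sorted_wrt_prefK[OF assms(2), of "sorted_list_of_set P" j]
    by (simp add: strict_sorted_list_of_set)
next
  fix xs assume xs: "set xs = P \<and> distinct xs \<and> sorted_wrt (\<lambda>x y. (x, y) \<in> prefK k j \<inter> P \<times> P) xs"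
  then have sx: "sorted_wrt (<) xs" using sorted_wrt_prefK[OF assms(2)] by auto
  show "xs = sorted_list_of_set P"
  proof (rule strict_sorted_equal)
    show "sorted_wrt (<) (sorted_list_of_set P)" by (rule strict_sorted_list_of_set)
    show "sorted_wrt (<) xs" by (rule sx)
    show "set xs = set (sorted_list_of_set P)" using xs assms(1) by simp
  qed
qed

lemma greed_stay:
  assumes "finite S" "\<forall>x\<in>set xs. x \<notin> S \<and> B < sum c S + c x"
  shows "greed_aux B c xs S = S"
  using assms(2)
proof (induction xs)
  case Nil then show ?case by simp
next
  case (Cons a xs)
  then have "\<not> sum c (insert a S) \<le> B" using assms(1) by auto
  then show ?case using Cons by simp
qed

lemma top_single:
  assumes "finite P" "P \<subseteq> {0..k+2}" "P \<noteq> {}" "cst (Min P) = 3"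
  shows "top_agent (prefK k) i 3 cst P = {Min P}"
proof -
  have "top_agent (prefK k) i 3 cst P = greed_aux 3 cst (sorted_list_of_set P) {}"
    unfolding top_agent_def GREED_def using order_list_prefK[OF assms(1,2)] by simp
  also have "\<dots> = greed_aux 3 cst (sorted_list_of_set (P - {Min P})) {Min P}"
    using sorted_list_of_set_nonempty[OF assms(1,3)] assms(4) by simp
  also have "\<dots> = {Min P}"
    using assms(1) by (intro greed_stay) (auto simp: assms(4))
  finally show ?thesis .
qed

lemma top_T:
  shows "top_agent (prefK k) i 3 cst {0..k+2} = {0, 2}"
proof -
  have e: "{0..k+2} = {0..<k+3}" by auto
  have l: "sorted_list_of_set {0..k+2} = 0 # 1 # 2 # [3..<k+3]"
    unfolding e sorted_list_of_set_range
    apply (subst upt_conv_Cons, simp)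
    apply (subst upt_conv_Cons, simp)
    apply (subst upt_conv_Cons, simp)
    apply (simp add: numeral_3_eq_3)
    done
  have "top_agent (prefK k) i 3 cst {0..k+2} = greed_aux 3 cst (0 # 1 # 2 # [3..<k+3]) {}"
    unfolding top_agent_def GREED_def using order_list_prefK[of "{0..k+2}" k i] l
    by simp
  also have "\<dots> = greed_aux 3 cst [3..<k+3] (insert 2 {0})"
    by (simp add: cst_def)
  also have "\<dots> = insert 2 {0}"
    by (intro greed_stay) (auto simp: cst_def)
  also have "insert 2 {0} = {0, 2::nat}" by auto
  finally show ?thesis .
qed



lemma gsum_le:
  fixes r :: real
  assumes "h \<le> 2" "0 \<le> r"
  shows "(\<Sum>l=0..h. r ^ l) \<le> 1 + r + r^2"
proof -
  have "h = 0 \<or> h = 1 \<or> h = 2" using assms by auto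
  then show ?thesis using assms mult_nonneg_nonneg[of r r]
    by (auto simp: numeral_2_eq_2 power2_eq_square sum.atLeast0_atMost_Suc)
qed

lemma score_unhit:
  assumes fin: "\<forall>j<length Ps. finite (Ps!j) \<and> card (Ps!j) \<le> 2"
    and j0: "j0 < length Ps" "Ps!j0 \<inter> P = {}"
  shows "eqrep_score Ps P < real (length Ps) + 1"
proof -
  define n where "n = length Ps"
  define r where "r = 1 / real n"
  define t where "t j = (\<Sum>l=0..card (Ps ! j \<inter> P). r ^ l)" for j
  have n1: "1 \<le> n" using j0 n_def by auto
  have r0: "0 \<le> r" unfolding r_def by simp
  have tle: "t j \<le> 1 + r + r^2" if "j < n" for j
  proof -
    have "card (Ps ! j \<inter> P) \<le> card (Ps ! j)" using fin that n_def by (intro card_mono) auto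
    then have "card (Ps ! j \<inter> P) \<le> 2" using fin that n_def by fastforce
    then show ?thesis unfolding t_def using gsum_le r0 by blast
  qed
  have tj0: "t j0 = 1" unfolding t_def using j0 by simp
  have "eqrep_score Ps P = (\<Sum>j<n. t j)" unfolding eqrep_score_def t_def r_def n_def by simp
  also have "\<dots> = t j0 + (\<Sum>j\<in>{..<n} - {j0}. t j)"
    using j0 n_def by (subst sum.remove[of _ j0]) auto
  also have "\<dots> \<le> 1 + (\<Sum>j\<in>{..<n} - {j0}. 1 + r + r^2)"
    using tle tj0 by (intro add_mono sum_mono) auto
  also have "\<dots> = 1 + (real n - 1) * (1 + r + r^2)"
    using j0 n_def n1 by (simp add: of_nat_diff)
  also have "\<dots> < real n + 1"
  proof -
    have nr: "real n * r = 1" unfolding r_def using n1 by simp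
    have "(real n - 1) * (1 + r + r^2) = real n - 1 + (real n * r) * (1 + r) - (r + r^2)"
      by (simp add: algebra_simps power2_eq_square)
    also have "\<dots> = real n - r^2 - r + r + r - r" using nr by (simp add: algebra_simps power2_eq_square)
    finally have "(real n - 1) * (1 + r + r^2) = real n - r^2" by simp
    moreover have "0 < r" unfolding r_def using n1 by simp
    ultimately show ?thesis by simp
  qed
  finally show ?thesis unfolding n_def .
qed

lemma score_hit1:
  assumes "\<forall>j<length Ps. card (Ps!j \<inter> P) = 1" "1 \<le> length Ps"
  shows "eqrep_score Ps P = real (length Ps) + 1"
proof -
  have "eqrep_score Ps P = (\<Sum>j<length Ps. 1 + 1 / real (length Ps))"
    unfolding eqrep_score_def using assms(1) by (intro sum.cong) auto
  also have "\<dots> = real (length Ps) * (1 + 1 / real (length Ps))" by simp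
  also have "\<dots> = real (length Ps) + 1"
  proof -
    have "Ps \<noteq> []" using assms(2) by auto
    then show ?thesis by (simp add: field_simps)
  qed
  finally show ?thesis .
qed

lemma eq_rep_char:
  assumes fin: "\<forall>j<length Ps. finite (Ps!j) \<and> card (Ps!j) \<le> 2"
    and n1: "1 \<le> length Ps"
    and feas: "Pst \<subseteq> \<Union>(set Ps)" "sum c Pst \<le> k * B"
    and hit1: "\<forall>j<length Ps. card (Ps!j \<inter> Pst) = 1"
    and uniq: "\<And>P. P \<subseteq> \<Union>(set Ps) \<Longrightarrow> sum c P \<le> k * B \<Longrightarrow> (\<forall>j<length Ps. Ps!j \<inter> P \<noteq> {}) \<Longrightarrow> P = Pst"
  shows "eq_rep k c B Ps = Pst"
proof -
  have sP: "eqrep_score Ps Pst = real (length Ps) + 1" using score_hit1[OF hit1 n1] .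
  have lt: "eqrep_score Ps P < real (length Ps) + 1"
    if "P \<subseteq> \<Union>(set Ps)" "sum c P \<le> k * B" "P \<noteq> Pst" for P
  proof -
    from uniq that obtain j0 where "j0 < length Ps" "Ps!j0 \<inter> P = {}" by blast
    then show ?thesis using score_unhit fin by blast
  qed
  have "{P. P \<subseteq> \<Union>(set Ps) \<and> sum c P \<le> k * B \<and>
         (\<forall>P'. P' \<subseteq> \<Union>(set Ps) \<and> sum c P' \<le> k * B \<longrightarrow> eqrep_score Ps P' \<le> eqrep_score Ps P)} = {Pst}"
  proof (intro equalityI subsetI)
    fix P assume "P \<in> {P. P \<subseteq> \<Union>(set Ps) \<and> sum c P \<le> k * B \<and>
         (\<forall>P'. P' \<subseteq> \<Union>(set Ps) \<and> sum c P' \<le> k * B \<longrightarrow> eqrep_score Ps P' \<le> eqrep_score Ps P)}"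
    then have P: "P \<subseteq> \<Union>(set Ps)" "sum c P \<le> k * B" "eqrep_score Ps Pst \<le> eqrep_score Ps P"
      using feas by auto
    show "P \<in> {Pst}"
    proof (rule ccontr)
      assume "P \<notin> {Pst}"
      then have "eqrep_score Ps P < real (length Ps) + 1" using lt P by auto
      then show False using P(3) sP by simp
    qed
  next
    fix P assume "P \<in> {Pst}"
    then have "P = Pst" by simp
    moreover have "eqrep_score Ps P' \<le> eqrep_score Ps Pst" if "P' \<subseteq> \<Union>(set Ps)" "sum c P' \<le> k * B" for P'
      using lt[OF that] sP by (cases "P' = Pst") auto
    ultimately show "P \<in> {P. P \<subseteq> \<Union>(set Ps) \<and> sum c P \<le> k * B \<and>
         (\<forall>P'. P' \<subseteq> \<Union>(set Ps) \<and> sum c P' \<le> k * B \<longrightarrow> eqrep_score Ps P' \<le> eqrep_score Ps P)}"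
      using feas by auto
  qed
  then show ?thesis unfolding eq_rep_def by (simp add: tie_break_single)
qed



declare upt_Suc[simp del]

definition bal :: "nat \<Rightarrow> nat set" where
  "bal j = (if j = 0 then {0, 2} else if j = 1 then {1, 3} else {j + 2})"

definition bal' :: "nat \<Rightarrow> nat set" where
  "bal' j = (if j = 0 then {1} else bal j)"

definition Ps0 :: "nat \<Rightarrow> nat set list" where
  "Ps0 k = map bal [0..<Suc k]"

definition Cs0 :: "nat \<Rightarrow> nat set list" where
  "Cs0 k = map (\<lambda>j. if j = 0 then {0, 1, 2} else bal j) [0..<Suc k]"

lemma Ps0_upd: "(Ps0 k)[0 := {1}] = map bal' [0..<Suc k]"
  by (rule nth_equalityI) (auto simp: Ps0_def bal'_def nth_list_update)

lemma sum_Z: "sum cst {4..k+2} = 3 * (k - 1)"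
proof -
  have "sum cst {4..k+2} = sum (\<lambda>_. 3) {4..k+2}" by (intro sum.cong) (auto simp: cst_def)
  then show ?thesis by simp
qed

lemma union_Ps0:
  assumes "1 \<le> k"
  shows "\<Union>(set (Ps0 k)) = {0..k+2}"
proof (intro equalityI subsetI)
  fix x assume "x \<in> \<Union>(set (Ps0 k))"
  then have "\<exists>j\<le>k. x \<in> bal j" unfolding Ps0_def by (auto simp: less_Suc_eq_le)
  then obtain j where "j \<le> k" "x \<in> bal j" by blast
  then show "x \<in> {0..k+2}" using assms by (auto simp: bal_def split: if_splits)
next
  fix x assume x: "x \<in> {0..k+2}"
  show "x \<in> \<Union>(set (Ps0 k))"
  proof (cases "x \<le> 3")
    case True
    then have "x \<in> bal 0 \<or> x \<in> bal 1" by (auto simp: bal_def)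
    moreover have "bal 0 \<in> set (Ps0 k)" "bal 1 \<in> set (Ps0 k)" using assms by (auto simp: Ps0_def)
    ultimately show ?thesis by blast
  next
    case False
    then have "bal (x - 2) = {x}" by (auto simp: bal_def)
    moreover have "bal (x - 2) \<in> set (Ps0 k)" using x False by (auto simp: Ps0_def)
    ultimately show ?thesis by blast
  qed
qed

lemma union_Ps1:
  assumes "1 \<le> k"
  shows "\<Union>(set (map bal' [0..<Suc k])) = {1, 3} \<union> {4..k+2}"
proof (intro equalityI subsetI)
  fix x assume "x \<in> \<Union>(set (map bal' [0..<Suc k]))"
  then have "\<exists>j\<le>k. x \<in> bal' j" by (auto simp: less_Suc_eq_le)
  then obtain j where "j \<le> k" "x \<in> bal' j" by blast
  then show "x \<in> {1, 3} \<union> {4..k+2}" using assms by (auto simp: bal'_def bal_def split: if_splits)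
next
  fix x assume x: "x \<in> {1, 3} \<union> {4..k+2}"
  show "x \<in> \<Union>(set (map bal' [0..<Suc k]))"
  proof (cases "x \<le> 3")
    case True
    then have "x \<in> bal' 1" using x by (auto simp: bal'_def bal_def)
    moreover have "bal' 1 \<in> set (map bal' [0..<Suc k])" using assms by auto
    ultimately show ?thesis by blast
  next
    case False
    then have "bal' (x - 2) = {x}" by (auto simp: bal'_def bal_def)
    moreover have "bal' (x - 2) \<in> set (map bal' [0..<Suc k])" using x False by auto
    ultimately show ?thesis by blast
  qed
qed

lemma bal_fin: "finite (bal j) \<and> card (bal j) \<le> 2"
  by (auto simp: bal_def)

lemma bal'_fin: "finite (bal' j) \<and> card (bal' j) \<le> 2"
  by (auto simp: bal'_def bal_def)

lemma sum_pair_le: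
  assumes "finite W" "a \<in> W" "b \<in> W" "a \<noteq> b"
  shows "cst a + cst b \<le> sum cst W"
proof -
  have "sum cst {a, b} \<le> sum cst W" using assms by (intro sum_mono2) auto
  then show ?thesis using assms(4) by simp
qed

lemma eq_rep_truthful:
  assumes k: "1 \<le> k"
  shows "eq_rep k cst 3 (Ps0 k) = {2, 3} \<union> {4..k+2}"
proof (rule eq_rep_char)
  show "\<forall>j<length (Ps0 k). finite (Ps0 k ! j) \<and> card (Ps0 k ! j) \<le> 2"
    using bal_fin by (auto simp: Ps0_def)
  show "1 \<le> length (Ps0 k)" by (simp add: Ps0_def)
  show "{2, 3} \<union> {4..k+2} \<subseteq> \<Union>(set (Ps0 k))" using union_Ps0[OF k] k by auto
  have "sum cst ({2, 3} \<union> {4..k+2}) = sum cst {2, 3} + sum cst {4..k+2}"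
    by (intro sum.union_disjoint) auto
  also have "\<dots> = 3 + 3 * (k - 1)" using sum_Z by (simp add: cst_def)
  finally show "sum cst ({2, 3} \<union> {4..k+2}) \<le> k * 3" using k by simp
  show "\<forall>j<length (Ps0 k). card (Ps0 k ! j \<inter> ({2, 3} \<union> {4..k+2})) = 1"
  proof (intro allI impI)
    fix j assume j: "j < length (Ps0 k)"
    then have jk: "j \<le> k" by (simp add: Ps0_def)
    have "Ps0 k ! j \<inter> ({2, 3} \<union> {4..k+2}) = (if j = 0 then {2} else if j = 1 then {3} else {j+2})"
      using jk unfolding Ps0_def by (auto simp: bal_def nth_append simp del: upt_Suc)
    then show "card (Ps0 k ! j \<inter> ({2, 3} \<union> {4..k+2})) = 1" by simp
  qed
  fix P assume P: "P \<subseteq> \<Union>(set (Ps0 k))" "sum cst P \<le> k * 3" "\<forall>j<length (Ps0 k). Ps0 k ! j \<inter> P \<noteq> {}"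
  have Pr: "P \<subseteq> {0..k+2}" using P(1) union_Ps0[OF k] by simp
  have hit: "bal j \<inter> P \<noteq> {}" if "j \<le> k" for j
    using P(3) that by (auto simp: Ps0_def simp del: upt_Suc)
  have ZP: "{4..k+2} \<subseteq> P"
  proof
    fix x assume x: "x \<in> {4..k+2}"
    then have "bal (x - 2) = {x}" by (auto simp: bal_def)
    then show "x \<in> P" using hit[of "x - 2"] x by auto
  qed
  define W where "W = P \<inter> {0..3}"
  have fW: "finite W" unfolding W_def by simp
  have PW: "P = W \<union> {4..k+2}" using ZP Pr unfolding W_def by auto
  have "sum cst P = sum cst W + sum cst {4..k+2}"
    unfolding PW by (intro sum.union_disjoint) (auto simp: W_def)
  then have sW: "sum cst W \<le> 3" using P(2) sum_Z k by simp
  have h0: "0 \<in> W \<or> 2 \<in> W" using hit[of 0] unfolding W_def by (auto simp: bal_def)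
  have h1: "1 \<in> W \<or> 3 \<in> W" using hit[of 1] k unfolding W_def by (auto simp: bal_def)
  have n0: "0 \<notin> W"
  proof
    assume "0 \<in> W"
    then show False using h1 sum_pair_le[OF fW, of 0 1] sum_pair_le[OF fW, of 0 3] sW
      by (auto simp: cst_def)
  qed
  then have "2 \<in> W" using h0 by simp
  have n1: "1 \<notin> W"
  proof
    assume "1 \<in> W"
    then show False using \<open>2 \<in> W\<close> sum_pair_le[OF fW, of 1 2] sW by (auto simp: cst_def)
  qed
  then have "3 \<in> W" using h1 by simp
  have "W = {2, 3}"
  proof
    show "W \<subseteq> {2, 3}"
    proof
      fix x assume xW: "x \<in> W"
      have "x \<in> {0, 1, 2, 3}" using xW unfolding W_def by auto
      then show "x \<in> {2, 3}" using xW n0 n1 by auto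
    qed
    show "{2, 3} \<subseteq> W" using \<open>2 \<in> W\<close> \<open>3 \<in> W\<close> by auto
  qed
  then show "P = {2, 3} \<union> {4..k+2}" using PW by simp
qed

lemma eq_rep_manip:
  assumes k: "1 \<le> k"
  shows "eq_rep k cst 3 (map bal' [0..<Suc k]) = {1} \<union> {4..k+2}"
proof (rule eq_rep_char)
  show "\<forall>j<length (map bal' [0..<Suc k]). finite (map bal' [0..<Suc k] ! j) \<and> card (map bal' [0..<Suc k] ! j) \<le> 2"
    using bal'_fin by (auto simp del: upt_Suc)
  show "1 \<le> length (map bal' [0..<Suc k])" by simp
  show "{1} \<union> {4..k+2} \<subseteq> \<Union>(set (map bal' [0..<Suc k]))" using union_Ps1[OF k] by auto
  have "sum cst ({1} \<union> {4..k+2}) = sum cst {1} + sum cst {4..k+2}"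
    by (intro sum.union_disjoint) auto
  also have "\<dots> = 3 + 3 * (k - 1)" using sum_Z by (simp add: cst_def)
  finally show "sum cst ({1} \<union> {4..k+2}) \<le> k * 3" using k by simp
  show "\<forall>j<length (map bal' [0..<Suc k]). card (map bal' [0..<Suc k] ! j \<inter> ({1} \<union> {4..k+2})) = 1"
  proof (intro allI impI)
    fix j assume j: "j < length (map bal' [0..<Suc k])"
    then have jk: "j \<le> k" by simp
    have "map bal' [0..<Suc k] ! j \<inter> ({1} \<union> {4..k+2}) = (if j = 0 then {1} else if j = 1 then {1} else {j+2})"
      using jk by (auto simp: bal'_def bal_def nth_append simp del: upt_Suc)
    then show "card (map bal' [0..<Suc k] ! j \<inter> ({1} \<union> {4..k+2})) = 1" by simp
  qed
  fix P assume P: "P \<subseteq> \<Union>(set (map bal' [0..<Suc k]))" "sum cst P \<le> k * 3"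
    "\<forall>j<length (map bal' [0..<Suc k]). map bal' [0..<Suc k] ! j \<inter> P \<noteq> {}"
  have Pr: "P \<subseteq> {1, 3} \<union> {4..k+2}" using P(1) union_Ps1[OF k] by simp
  have hit: "bal' j \<inter> P \<noteq> {}" if "j \<le> k" for j
    using P(3) that by (auto simp del: upt_Suc)
  have ZP: "{4..k+2} \<subseteq> P"
  proof
    fix x assume x: "x \<in> {4..k+2}"
    then have "bal' (x - 2) = {x}" by (auto simp: bal'_def bal_def)
    then show "x \<in> P" using hit[of "x - 2"] x by auto
  qed
  have "1 \<in> P" using hit[of 0] by (auto simp: bal'_def)
  have n3: "3 \<notin> P"
  proof
    assume "3 \<in> P"
    have fP: "finite P" by (rule finite_subset[OF Pr]) auto
    have "sum cst ({1, 3} \<union> {4..k+2}) \<le> sum cst P"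
      using ZP \<open>1 \<in> P\<close> \<open>3 \<in> P\<close> fP by (intro sum_mono2) auto
    moreover have "sum cst ({1, 3} \<union> {4..k+2}) = sum cst {1, 3} + sum cst {4..k+2}"
      by (intro sum.union_disjoint) auto
    ultimately show False using P(2) sum_Z k by (simp add: cst_def)
  qed
  show "P = {1} \<union> {4..k+2}" using Pr ZP n3 \<open>1 \<in> P\<close> by auto
qed



lemma val_zero: "A \<inter> Q = {} \<Longrightarrow> val M c Q A = 0"
  by (cases M) (auto simp: val_def)

lemma val_pos_mem: "0 < val M c Q A \<Longrightarrow> A \<inter> Q \<noteq> {}"
  by (cases M) (auto simp: val_def)

lemma val_one: "0 < val M cst {1} {1}"
  by (cases M) (auto simp: val_def cst_def)

lemma val_le_one: "val M c {1} A \<le> val M c {1} {1}"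
proof (cases M)
  case Overlap
  have "card (A \<inter> {1}) \<le> card {1::nat}" by (intro card_mono) auto
  then show ?thesis using Overlap by (simp add: val_def)
next
  case Cost
  have "sum c (A \<inter> {1}) \<le> sum c {1::nat}" by (intro sum_mono2) auto
  then show ?thesis using Cost by (simp add: val_def)
qed

lemma top_one:
  assumes "1 \<le> k" "1 \<in> P" "P \<subseteq> {1..k+2}"
  shows "top_agent (prefK k) i 3 cst P = {1}"
proof -
  have fP: "finite P" by (rule finite_subset[OF assms(3)]) auto
  have m: "Min P = 1" using fP assms by (intro Min_eqI) auto
  have s: "P \<subseteq> {0..k+2}" using assms(3) by auto
  have ne: "P \<noteq> {}" using assms(2) by auto
  have c: "cst (Min P) = 3" using m by (simp add: cst_def)
  show ?thesis using top_single[OF fP s ne c] m by simp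
qed

lemma Fstar_manip:
  assumes k: "1 \<le> k" and ar: "allocation_rule F" and un: "unanimous F"
  shows "F_star M F (prefK k) ({1} \<union> {4..k+2}) cst 3 (replicate (Suc k) {1}) 0 = {1}"
proof -
  define Pc where "Pc = {1} \<union> {4..k+2}"
  define Rp where "Rp = replicate (Suc k) ({1}::nat set)"
  have ai: "alloc_instance Pc cst 3" unfolding alloc_instance_def Pc_def using cst_ge1 cst_le3 by auto
  have feas1: "Y = {1}" if Y: "Y \<subseteq> Pc" "sum cst Y \<le> 3" "1 \<in> Y" for Y
  proof (rule ccontr)
    assume "Y \<noteq> {1}"
    then obtain y where y: "y \<in> Y" "y \<noteq> 1" using Y(3) by blast
    have fY: "finite Y" by (rule finite_subset[OF Y(1)]) (simp add: Pc_def)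
    have "cst 1 + cst y \<le> sum cst Y" using sum_pair_le[OF fY Y(3) y(1)] y(2) by simp
    moreover have "cst y = 3" using y Y(1) unfolding Pc_def by (auto simp: cst_def)
    ultimately show False using Y(2) by (simp add: cst_def)
  qed
  have memF: "F Pc cst 3 (Rp[0 := A']) \<subseteq> Pc \<and> sum cst (F Pc cst 3 (Rp[0 := A'])) \<le> 3"
    if "A' \<subseteq> Pc" for A'
  proof -
    have "Rp \<in> profiles_on (Suc k) Pc" unfolding Rp_def profiles_on_def Pc_def by auto
    then have "Rp[0 := A'] \<in> profiles_on (Suc k) Pc" using prof_upd that by blast
    moreover have "length (Rp[0 := A']) = Suc k" unfolding Rp_def by simp
    ultimately show ?thesis using ar ai unfolding allocation_rule_def by auto
  qed
  have Rp1: "Rp[0 := {1}] = Rp" unfolding Rp_def by (simp add: list_update_same_conv)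
  have X0: "F Pc cst 3 Rp = {1}"
  proof (rule feas1)
    show "F Pc cst 3 Rp \<subseteq> Pc" "sum cst (F Pc cst 3 Rp) \<le> 3"
      using memF[of "{1}"] Rp1 by (auto simp: Pc_def)
    have "{1} \<subseteq> F Pc cst 3 (replicate (Suc k) {1})"
      by (rule un[unfolded unanimous_def, rule_format]) (use ai in \<open>auto simp: Pc_def cst_def\<close>)
    then show "1 \<in> F Pc cst 3 Rp" unfolding Rp_def by auto
  qed
  have top: "top_agent (prefK k) 0 3 cst Pc = {1}" unfolding Pc_def using k by (intro top_one) auto
  define fam where "fam = {F Pc cst 3 (Rp[0 := A']) | A'. A' \<subseteq> Pc}"
  have one_fam: "{1} \<in> fam"
  proof -
    have "{1} \<subseteq> Pc" by (simp add: Pc_def)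
    then have "F Pc cst 3 (Rp[0 := {1}]) \<in> fam" unfolding fam_def by blast
    then show ?thesis using X0 Rp1 by simp
  qed
  have "best (strict_pref M cst {1}) fam = {{1}}"
  proof (intro equalityI subsetI)
    fix X assume X: "X \<in> best (strict_pref M cst {1}) fam"
    then have "X \<in> fam" unfolding best_def by simp
    then have "\<exists>A'. X = F Pc cst 3 (Rp[0 := A']) \<and> A' \<subseteq> Pc" unfolding fam_def by simp
    then obtain A' where A'c: "X = F Pc cst 3 (Rp[0 := A']) \<and> A' \<subseteq> Pc" ..
    then have A': "A' \<subseteq> Pc" "X = F Pc cst 3 (Rp[0 := A'])" by simp_all
    note one_fam
    then have "\<not> strict_pref M cst {1} {1} X" using X unfolding best_def by auto
    then have "val M cst {1} {1} \<le> val M cst {1} X" unfolding strict_val by simp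
    then have "0 < val M cst {1} X" using val_one[of M] by simp
    then have "1 \<in> X" using val_pos_mem by blast
    then show "X \<in> {{1}}" using feas1 memF[OF A'(1)] A'(2) by auto
  next
    fix X assume "X \<in> {{1::nat}}"
    then have X: "X = {1}" by simp
    note one_fam
    moreover have "\<not> strict_pref M cst {1} Y {1}" for Y unfolding strict_val using val_le_one[of M cst Y] by simp
    ultimately show "X \<in> best (strict_pref M cst {1}) fam" unfolding best_def X by auto
  qed
  then have "best_resp M F (prefK k) Pc cst 3 Rp 0 = {1}"
    unfolding best_resp_def top fam_def[symmetric] by (simp add: tie_break_single)
  then have "F_star M F (prefK k) Pc cst 3 Rp 0 = {1}" unfolding F_star_def using Rp1 X0 by simp
  then show ?thesis unfolding Pc_def Rp_def .
qed



lemma main_manip: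
  assumes k: "1 \<le> k" and ar: "allocation_rule F" and un: "unanimous F"
  shows "successful_manip kind M (eq_rep k) F (prefK k) cst 3 (Ps0 k) 0 {1}"
proof -
  define Pc where "Pc = {2, 3} \<union> {4..k+2}"
  define Pc' where "Pc' = {1} \<union> {4..k+2}"
  have e1: "eq_rep k cst 3 (Ps0 k) = Pc" unfolding Pc_def using eq_rep_truthful[OF k] .
  have e2: "eq_rep k cst 3 ((Ps0 k)[0 := {1}]) = Pc'" unfolding Pc'_def Ps0_upd using eq_rep_manip[OF k] .
  have eQ: "top_agent (prefK k) 0 3 cst (Pc \<union> Pc') = {1}"
    using k by (intro top_one) (auto simp: Pc_def Pc'_def)
  have len: "length (Ps0 k) = Suc k" by (simp add: Ps0_def)
  have aiPc: "alloc_instance Pc cst 3" unfolding alloc_instance_def Pc_def using cst_ge1 cst_le3 by auto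
  have zero: "val M cst {1} (F_star M F (prefK k) Pc cst 3 As 0) = 0" if "As \<in> profiles_on (Suc k) Pc" for As
  proof -
    have "F_star M F (prefK k) Pc cst 3 As 0 \<subseteq> Pc" using Fstar_sub[OF aiPc ar that] by simp
    then have "F_star M F (prefK k) Pc cst 3 As 0 \<inter> {1} = {}" unfolding Pc_def by auto
    then show ?thesis by (rule val_zero)
  qed
  have good: "F_star M F (prefK k) Pc' cst 3 (replicate (Suc k) {1}) 0 = {1}"
    unfolding Pc'_def using Fstar_manip[OF k ar un] .
  have p1: "replicate (Suc k) {} \<in> profiles_on (Suc k) Pc" unfolding profiles_on_def by auto
  have p2: "replicate (Suc k) {1} \<in> profiles_on (Suc k) Pc'" unfolding profiles_on_def Pc'_def by auto
  have st1: "strict_pref M cst {1} (F_star M F (prefK k) Pc' cst 3 (replicate (Suc k) {1}) 0)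
      (F_star M F (prefK k) Pc cst 3 (replicate (Suc k) {}) 0)"
    unfolding strict_val good zero[OF p1] using val_one[of M] .
  have strict: "\<exists>As\<in>profiles_on (Suc k) Pc. \<exists>As'\<in>profiles_on (Suc k) Pc'.
      strict_pref M cst {1} (F_star M F (prefK k) Pc' cst 3 As' 0) (F_star M F (prefK k) Pc cst 3 As 0)"
  proof -
    have s2: "\<exists>As'\<in>profiles_on (Suc k) Pc'. strict_pref M cst {1} (F_star M F (prefK k) Pc' cst 3 As' 0)
      (F_star M F (prefK k) Pc cst 3 (replicate (Suc k) {}) 0)"
      using st1 p2 by (rule bexI)
    show ?thesis using s2 p1 by (rule bexI)
  qed
  have weak: "\<forall>As\<in>profiles_on (Suc k) Pc. \<forall>As'\<in>profiles_on (Suc k) Pc'.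
      weak_pref M cst {1} (F_star M F (prefK k) Pc' cst 3 As' 0) (F_star M F (prefK k) Pc cst 3 As 0)"
  proof (intro ballI)
    fix As As' assume As: "As \<in> profiles_on (Suc k) Pc" and "As' \<in> profiles_on (Suc k) Pc'"
    show "weak_pref M cst {1} (F_star M F (prefK k) Pc' cst 3 As' 0) (F_star M F (prefK k) Pc cst 3 As 0)"
      unfolding weak_val zero[OF As] by simp
  qed
  have unf: "successful_manip kind M (eq_rep k) F (prefK k) cst 3 (Ps0 k) 0 {1} =
    (case kind of
        Pessimistic \<Rightarrow>
          (\<forall>As\<in>profiles_on (Suc k) Pc. \<forall>As'\<in>profiles_on (Suc k) Pc'.
              weak_pref M cst {1} (F_star M F (prefK k) Pc' cst 3 As' 0) (F_star M F (prefK k) Pc cst 3 As 0)) \<and>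
          (\<exists>As\<in>profiles_on (Suc k) Pc. \<exists>As'\<in>profiles_on (Suc k) Pc'.
              strict_pref M cst {1} (F_star M F (prefK k) Pc' cst 3 As' 0) (F_star M F (prefK k) Pc cst 3 As 0))
      | Optimistic \<Rightarrow>
          (\<exists>As\<in>profiles_on (Suc k) Pc. \<exists>As'\<in>profiles_on (Suc k) Pc'.
              strict_pref M cst {1} (F_star M F (prefK k) Pc' cst 3 As' 0) (F_star M F (prefK k) Pc cst 3 As 0)))"
    unfolding successful_manip_def Let_def e1 e2 eQ len ..
  show ?thesis
  proof (cases kind)
    case Pessimistic
    then show ?thesis unfolding unf using weak strict by simp
  next
    case Optimistic
    then show ?thesis unfolding unf using strict by simp
  qed
qed

lemma not_U:
  assumes k: "1 \<le> k" and ar: "allocation_rule F" and un: "unanimous F"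
  shows "\<not> U_FSSP kind M (eq_rep k) F"
proof
  assume U: "U_FSSP kind M (eq_rep k) F"
  have inst: "shortlisting_instance {0..k+2} cst 3"
    unfolding shortlisting_instance_def using cst_ge1 cst_le3 by auto
  have prefs: "\<forall>j<length (Ps0 k). prefK k j \<subseteq> {0..k+2} \<times> {0..k+2} \<and> strict_linear_order_on {0..k+2} (prefK k j)"
    unfolding strict_linear_order_on_def trans_def irrefl_def total_on_def prefK_def by auto
  have lens: "length (Cs0 k) = length (Ps0 k)" by (simp add: Cs0_def Ps0_def)
  have sub: "\<forall>j<length (Ps0 k). Cs0 k ! j \<subseteq> {0..k+2} \<and> Ps0 k ! j \<subseteq> Cs0 k ! j"
  proof (intro allI impI)
    fix j assume "j < length (Ps0 k)"
    then have j: "j \<le> k" by (simp add: Ps0_def)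
    then have "Cs0 k ! j = (if j = 0 then {0, 1, 2} else bal j)" "Ps0 k ! j = bal j"
      by (simp_all add: Cs0_def Ps0_def del: upt_Suc)
    then show "Cs0 k ! j \<subseteq> {0..k+2} \<and> Ps0 k ! j \<subseteq> Cs0 k ! j" using j k by (auto simp: bal_def)
  qed
  have i: "0 < length (Ps0 k)" by (simp add: Ps0_def)
  have C0: "Cs0 k ! 0 = {0, 1, 2}" by (simp add: Cs0_def del: upt_Suc)
  have UU: "Cs0 k ! 0 \<union> \<Union>(set (Ps0 k)) = {0..k+2}" unfolding C0 union_Ps0[OF k] using k by auto
  have T: "top_agent (prefK k) 0 3 cst (Cs0 k ! 0 \<union> \<Union>(set (Ps0 k))) = {0, 2}" unfolding UU by (rule top_T)
  have P0: "Ps0 k ! 0 = {0, 2}" by (simp add: Ps0_def bal_def del: upt_Suc)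
  have upd: "(Ps0 k)[0 := {0, 2}] = Ps0 k" using list_update_id[of "Ps0 k" 0] P0 by simp
  have P': "{1} \<subseteq> Cs0 k ! 0 \<union> \<Union>(set (Ps0 k))" unfolding UU by auto
  have "\<not> (\<exists>P'. P' \<subseteq> Cs0 k ! 0 \<union> \<Union>(set (Ps0 k)) \<and>
           successful_manip kind M (eq_rep k) F (prefK k) cst 3
             ((Ps0 k)[0 := top_agent (prefK k) 0 3 cst (Cs0 k ! 0 \<union> \<Union>(set (Ps0 k)))]) 0 P')"
    by (rule U[unfolded U_FSSP_def, rule_format, where PP="{0..k+2}" and c=cst and B=3 and prefs="prefK k" and Cs="Cs0 k" and Ps="Ps0 k" and i=0])
      (intro conjI inst prefs lens sub i)
  then have nx: "\<not> (\<exists>P'. P' \<subseteq> Cs0 k ! 0 \<union> \<Union>(set (Ps0 k)) \<and>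
           successful_manip kind M (eq_rep k) F (prefK k) cst 3 (Ps0 k) 0 P')"
    by (simp only: T upd not_False_eq_True)
  show False using nx P' main_manip[OF k ar un, of kind M] by blast
qed

theorem proposition6:
  fixes k :: nat and F :: alloc_rule and M :: pref_model
  assumes "1 \<le> k" and "allocation_rule F" and "unanimous F"
  shows "\<not> U_FSSP Pessimistic M (eq_rep k) F \<and> \<not> U_FSSP Optimistic M (eq_rep k) F"
  using not_U[OF assms] by blast


end
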